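(* Let $n\ge 2$ and let $G$ be a graph on $2n+1$ vertices with at least $n^2+n$ edges that contains no two distinct vertices of the same degree joined by a path of length three. Let $\beta$ be the largest integer such that $G$ contains two distinct vertices of degree $\beta$. Then $\beta\ge 3$.
   Context: A path of length three joining vertices $a$ and $b$ is a path $a\,x\,y\,b$ with four distinct vertices and three edges. Graphs are finite and simple. *)

theory Defs
  imports Main
begin

definition simple_graph :: "'a set \<Rightarrow> 'a set set \<Rightarrow> bool" where
  "simple_graph V E \<longleftrightarrow> finite V \<and> (\<forall>e\<in>E. \<exists>u v. u \<in> V \<and> v \<in> V \<and> u \<noteq> v \<and> e = {u, v})"

definition adj :: "'a set set \<Rightarrow> 'a \<Rightarrow> 'a \<Rightarrow> bool" where
  "adj E u v \<longleftrightarrow> {u, v} \<in> E"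

definition degree :: "'a set \<Rightarrow> 'a set set \<Rightarrow> 'a \<Rightarrow> nat" where
  "degree V E v = card {u \<in> V. adj E v u}"

definition path3 :: "'a set \<Rightarrow> 'a set set \<Rightarrow> 'a \<Rightarrow> 'a \<Rightarrow> bool" where
  "path3 V E a b \<longleftrightarrow> (\<exists>x y. x \<in> V \<and> y \<in> V \<and> distinct [a, x, y, b] \<and>
      adj E a x \<and> adj E x y \<and> adj E y b)"

definition beta :: "'a set \<Rightarrow> 'a set set \<Rightarrow> nat" where
  "beta V E = (GREATEST k. \<exists>u\<in>V. \<exists>v\<in>V. u \<noteq> v \<and> degree V E u = k \<and> degree V E v = k)"

end

theory Submission
  imports Defs
begin

lemma sg_adjV:
  assumes "simple_graph V E" "adj E a b"
  shows "a \<in> V \<and> b \<in> V \<and> a \<noteq> b"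
proof -
  from assms obtain u v where "u \<in> V" "v \<in> V" "u \<noteq> v" "{a, b} = {u, v}"
    unfolding simple_graph_def adj_def by blast
  then show ?thesis by (auto simp: doubleton_eq_iff)
qed

lemma adj_sym: "adj E a b = adj E b a"
  by (simp add: adj_def insert_commute)

lemma handshake:
  assumes sg: "simple_graph V E"
  shows "(\<Sum>v\<in>V. degree V E v) = 2 * card E"
proof -
  have fin: "finite V" using sg by (simp add: simple_graph_def)
  have "E \<subseteq> Pow V" using sg unfolding simple_graph_def by auto
  then have finE: "finite E" using fin by (meson finite_Pow_iff finite_subset)
  have "(\<Sum>v\<in>V. degree V E v) = card (SIGMA v:V. {u\<in>V. adj E v u})"
    using fin by (simp add: degree_def)
  also have "(SIGMA v:V. {u\<in>V. adj E v u}) = (\<Union>e\<in>E. {p. {fst p, snd p} = e})"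
  proof (rule set_eqI)
    fix p :: "'a \<times> 'a"
    obtain a b where p: "p = (a, b)" by (cases p)
    show "p \<in> (SIGMA v:V. {u\<in>V. adj E v u}) \<longleftrightarrow> p \<in> (\<Union>e\<in>E. {p. {fst p, snd p} = e})"
      using sg_adjV[OF sg, of a b] unfolding p adj_def by auto
  qed
  also have "card (\<Union>e\<in>E. {p. {fst p, snd p} = e}) = (\<Sum>e\<in>E. card {p. {fst p, snd p} = e})"
  proof (rule card_UN_disjoint[OF finE])
    show "\<forall>e\<in>E. finite {p. {fst p, snd p} = e}"
    proof
      fix e assume "e \<in> E"
      then obtain a b where "e = {a, b}" using sg unfolding simple_graph_def by blast
      then have "{p. {fst p, snd p} = e} \<subseteq> {(a,b),(b,a)}" by (auto simp: doubleton_eq_iff)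
      then show "finite {p. {fst p, snd p} = e}" by (rule finite_subset) simp
    qed
  qed auto
  also have "\<dots> = (\<Sum>e\<in>E. 2)"
  proof (rule sum.cong[OF refl])
    fix e assume "e \<in> E"
    then obtain a b where ab: "e = {a, b}" "a \<noteq> b" using sg unfolding simple_graph_def by blast
    then have "{p. {fst p, snd p} = e} = {(a,b),(b,a)}" by (auto simp: doubleton_eq_iff)
    then show "card {p. {fst p, snd p} = e} = 2" using ab by simp
  qed
  finally show ?thesis by simp
qed

theorem lemma2p4:
  fixes V :: "'a set" and E :: "'a set set" and n :: nat
  assumes "n \<ge> 2"
    and "simple_graph V E"
    and "card V = 2 * n + 1"
    and "card E \<ge> n ^ 2 + n"
    and "\<forall>a\<in>V. \<forall>b\<in>V. a \<noteq> b \<and> degree V E a = degree V E b \<longrightarrow> \<not> path3 V E a b"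
  shows "beta V E \<ge> 3"
proof (rule ccontr)
  assume nb: "\<not> beta V E \<ge> 3"
  note sg = assms(2)
  define d where "d = degree V E"
  define N where "N v = {u\<in>V. adj E v u}" for v
  have dN: "d v = card (N v)" for v by (simp add: d_def N_def degree_def)
  have fin: "finite V" using sg by (simp add: simple_graph_def)
  have finN: "finite (N v)" for v using fin by (simp add: N_def)
  have NV: "N v \<subseteq> V - {v}" for v using sg_adjV[OF sg] by (auto simp: N_def)
  have dle: "d v \<le> 2 * n" for v
  proof -
    show ?thesis
    proof (cases "v \<in> V")
      case True
      have "d v \<le> card (V - {v})" unfolding dN using NV fin by (meson card_mono finite_Diff)
      also have "\<dots> = 2 * n" using assms(3) True fin by simp
      finally show ?thesis .
    next
      case False
      then have "N v = {}" using sg_adjV[OF sg] by (auto simp: N_def)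
      then show ?thesis by (simp add: dN)
    qed
  qed
  have inj: "d u < 3" if "u \<in> V" "v \<in> V" "u \<noteq> v" "d u = d v" for u v
  proof (rule ccontr)
    assume "\<not> d u < 3"
    have "3 \<le> d u" using \<open>\<not> d u < 3\<close> by simp
    also have "d u \<le> beta V E"
      unfolding beta_def
    proof (rule Greatest_le_nat[where b = "2*n"])
      show "\<exists>u'\<in>V. \<exists>v'\<in>V. u' \<noteq> v' \<and> degree V E u' = d u \<and> degree V E v' = d u"
        using that by (auto simp: d_def)
      show "y \<le> 2 * n" if "\<exists>u\<in>V. \<exists>v\<in>V. u \<noteq> v \<and> degree V E u = y \<and> degree V E v = y" for y
        using that dle by (auto simp: d_def)
    qed
    finally show False using nb by simp
  qed
  have hs: "(\<Sum>v\<in>V. d v) \<ge> 2 * n ^ 2 + 2 * n"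
    using handshake[OF sg] assms(4) unfolding d_def by simp
  have ex_x: "\<exists>x\<in>V. d x = 2 * n"
  proof (rule ccontr)
    assume "\<not> (\<exists>x\<in>V. d x = 2 * n)"
    then have dle': "d v \<le> 2 * n - 1" if "v \<in> V" for v using dle[of v] that by fastforce
    define Hi where "Hi = {v\<in>V. 3 \<le> d v}"
    have finHi: "finite Hi" using fin by (simp add: Hi_def)
    have "(\<Sum>v\<in>V. d v) = (\<Sum>v\<in>V. min (d v) 2 + (d v - 2))"
      by (rule sum.cong) auto
    also have "\<dots> = (\<Sum>v\<in>V. min (d v) 2) + (\<Sum>v\<in>V. d v - 2)"
      by (simp add: sum.distrib)
    also have "(\<Sum>v\<in>V. min (d v) 2) \<le> card V * 2"
      using sum_bounded_above[of V "\<lambda>v. min (d v) 2" 2] by simp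
    also have "(\<Sum>v\<in>V. d v - 2) = (\<Sum>v\<in>Hi. d v - 2)"
      by (rule sum.mono_neutral_right) (auto simp: Hi_def fin)
    also have "\<dots> = (\<Sum>k\<in>(\<lambda>v. d v - 2) ` Hi. k)"
    proof (rule sum.reindex[symmetric, unfolded comp_def])
      show "inj_on (\<lambda>v. d v - 2) Hi"
      proof (rule inj_onI)
        fix u v assume "u \<in> Hi" "v \<in> Hi" "d u - 2 = d v - 2"
        then have "d u = d v" by (auto simp: Hi_def)
        then show "u = v" using inj[of u v] \<open>u \<in> Hi\<close> \<open>v \<in> Hi\<close> by (auto simp: Hi_def)
      qed
    qed
    also have "\<dots> \<le> (\<Sum>k\<in>{0..2*n-3}. k)"
    proof (rule sum_mono2)
      show "(\<lambda>v. d v - 2) ` Hi \<subseteq> {0..2*n-3}" using dle' by (force simp: Hi_def)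
    qed auto
    also have "\<dots> = (2*n-3) * Suc (2*n-3) div 2" using gauss_sum_nat by simp
    finally have le: "2 * n ^ 2 + 2 * n \<le> card V * 2 + (2*n-3) * Suc (2*n-3) div 2"
      using hs by linarith
    obtain m where m: "n = m + 2" using assms(1) by (metis add.commute le_Suc_ex)
    have "(2*n-3) * Suc (2*n-3) = 2 * ((2*m+1)*(m+1))" unfolding m by (simp add: algebra_simps)
    then have "(2*n-3) * Suc (2*n-3) div 2 = (2*m+1)*(m+1)" by simp
    with le show False unfolding m assms(3) m by (simp add: algebra_simps power2_eq_square)
  qed
  then obtain x where xV: "x \<in> V" and dx: "d x = 2 * n" by blast
  have Nx: "N x = V - {x}"
  proof (rule card_subset_eq)
    show "finite (V - {x})" using fin by simp
    show "N x \<subseteq> V - {x}" by (rule NV)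
    show "card (N x) = card (V - {x})" using dx dN assms(3) fin xV by simp
  qed
  have adjx: "adj E v x" if "v \<in> V" "v \<noteq> x" for v
    using Nx that by (auto simp: N_def adj_sym)
  have P: "N a \<subseteq> {x, b}" if "a \<in> V" "b \<in> V" "a \<noteq> b" "a \<noteq> x" "b \<noteq> x" "d a = d b" for a b
  proof
    fix p assume "p \<in> N a"
    then have pV: "p \<in> V" and ap: "adj E a p" and "p \<noteq> a" using NV by (auto simp: N_def)
    show "p \<in> {x, b}"
    proof (rule ccontr)
      assume "p \<notin> {x, b}"
      have "p \<noteq> x" using \<open>p \<notin> {x, b}\<close> by simp
      have "adj E p x" using adjx[OF pV \<open>p \<noteq> x\<close>] .
      then have px: "adj E p x" .
      have xb: "adj E x b" using adjx[OF that(2,5)] by (simp add: adj_sym)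
      have "path3 V E a b"
        unfolding path3_def
        by (rule exI[of _ p], rule exI[of _ x]) (use pV xV ap px xb that \<open>p \<noteq> a\<close> \<open>p \<notin> {x, b}\<close> in \<open>simp only: distinct.simps list.set insert_iff empty_iff, blast\<close>)
      then show False using assms(5) that by (auto simp: d_def)
    qed
  qed
  have xNv: "x \<in> N v" if "v \<in> V" "v \<noteq> x" for v using adjx[OF that] xV by (simp add: N_def)
  define T2 where "T2 = {v\<in>V. v \<noteq> x \<and> d v = 2}"
  have finT2: "finite T2" using fin by (simp add: T2_def)
  have cT2: "card T2 \<le> 2"
  proof (cases "T2 = {}")
    case True then show ?thesis by simp
  next
    case False
    then obtain a where aT: "a \<in> T2" by blast
    have "T2 \<subseteq> insert a (N a - {x})"
    proof
      fix b assume bT: "b \<in> T2"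
      show "b \<in> insert a (N a - {x})"
      proof (cases "b = a")
        case False
        have sub: "N a \<subseteq> {x, b}" using P[of a b] aT bT False by (auto simp: T2_def)
        have "b \<in> N a"
        proof (rule ccontr)
          assume "b \<notin> N a"
          then have "N a \<subseteq> {x}" using sub by auto
          then have "card (N a) \<le> card {x}" by (intro card_mono) simp_all
          then have "card (N a) \<le> 1" by simp
          then show False using aT dN by (simp add: T2_def)
        qed
        then show ?thesis using bT by (auto simp: T2_def)
      qed simp
    qed
    then have "card T2 \<le> card (insert a (N a - {x}))" using finN by (simp add: card_mono)
    also have "\<dots> \<le> Suc (card (N a - {x}))" by (simp add: card_insert_le_m1 card_insert_if)
    also have "card (N a - {x}) = 1" using xNv[of a] aT dN[of a] finN by (simp add: T2_def)
    finally show ?thesis by simp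
  qed
  define Hi where "Hi = {v\<in>V. v \<noteq> x \<and> 3 \<le> d v}"
  have finHi: "finite Hi" using fin by (simp add: Hi_def)
  have Hi_empty: "Hi = {}"
  proof (rule ccontr)
    assume ne: "Hi \<noteq> {}"
    define k where "k = card Hi"
    have k1: "k \<ge> 1" using ne finHi k_def by (simp add: Suc_leI card_gt_0_iff)
    have bound: "d v \<le> k + 1" if vH: "v \<in> Hi" for v
    proof -
      have sub: "N v \<subseteq> insert x (Hi - {v}) \<union> (T2 \<inter> N v)"
      proof
        fix u assume uN: "u \<in> N v"
        then have uV: "u \<in> V" and "u \<noteq> v" and vu: "adj E v u" using NV by (auto simp: N_def)
        show "u \<in> insert x (Hi - {v}) \<union> (T2 \<inter> N v)"
        proof (cases "u = x \<or> u \<in> Hi")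
          case True then show ?thesis using \<open>u \<noteq> v\<close> by auto
        next
          case False
          have "{x, v} \<subseteq> N u" using xNv[of u] uV False vu vH by (auto simp: N_def adj_sym Hi_def)
          moreover have "x \<noteq> v" using vH by (auto simp: Hi_def)
          ultimately have "2 \<le> d u" unfolding dN using finN
            by (metis card_2_iff card_mono)
          then have "d u = 2" using False uV by (auto simp: Hi_def)
          then show ?thesis using False uV uN by (auto simp: T2_def)
        qed
      qed
      have c1: "card (T2 \<inter> N v) \<le> Suc 0"
        unfolding card_le_Suc0_iff_eq[OF finite_Int[OF disjI1[OF finT2]]]
      proof (intro ballI, rule ccontr)
        fix w w' assume wT: "w \<in> T2 \<inter> N v" and w'T: "w' \<in> T2 \<inter> N v" and "w \<noteq> w'"
        then have "N w \<subseteq> {x, w'}" using P[of w w'] by (auto simp: T2_def)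
        moreover have "v \<in> N w" using wT vH by (auto simp: N_def Hi_def T2_def adj_sym)
        moreover have "v \<noteq> x" "v \<noteq> w'" using vH w'T by (auto simp: Hi_def T2_def)
        ultimately show False by auto
      qed
      have "d v \<le> card (insert x (Hi - {v}) \<union> (T2 \<inter> N v))"
        unfolding dN using sub finHi finN by (simp add: card_mono)
      also have "\<dots> \<le> card (insert x (Hi - {v})) + card (T2 \<inter> N v)" by (rule card_Un_le)
      also have "card (insert x (Hi - {v})) \<le> Suc (card (Hi - {v}))" by (simp add: card_insert_if finHi)
      also have "card (Hi - {v}) = k - 1" using vH finHi k_def by simp
      finally show ?thesis using c1 k1 by simp
    qed
    have injH: "inj_on d Hi"
      by (rule inj_onI) (use inj in \<open>fastforce simp: Hi_def\<close>)
    have "d ` Hi \<subseteq> {3..k+1}" using bound by (auto simp: Hi_def)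
    then have "card (d ` Hi) \<le> card {3..k+1}" by (intro card_mono) simp_all
    then have "k \<le> k + 1 - 2" using card_image[OF injH] k_def by simp
    then show False using k1 by simp
  qed
  have d2: "d v \<le> 2" if "v \<in> V - {x}" for v
    using Hi_empty that by (auto simp: Hi_def)
  have T2sub: "T2 \<subseteq> V - {x}" by (auto simp: T2_def)
  have "(\<Sum>v\<in>V. d v) = d x + (\<Sum>v\<in>V - {x}. d v)" using fin xV by (simp add: sum.remove)
  also have "(\<Sum>v\<in>V - {x}. d v) = (\<Sum>v\<in>T2. d v) + (\<Sum>v\<in>(V - {x}) - T2. d v)"
    using sum.subset_diff[OF T2sub] fin by (simp add: add.commute)
  also have "(\<Sum>v\<in>T2. d v) \<le> card T2 * 2"
    using sum_bounded_above[of T2 d 2] T2sub d2 by auto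
  also have "(\<Sum>v\<in>(V - {x}) - T2. d v) \<le> card ((V - {x}) - T2) * 1"
    using sum_bounded_above[of "(V - {x}) - T2" d 1] d2 by (fastforce simp: T2_def)
  also have "card ((V - {x}) - T2) = 2 * n - card T2"
    using card_Diff_subset[OF finT2 T2sub] fin xV assms(3) by simp
  finally have "2 * n ^ 2 + 2 * n \<le> 2 * n + (card T2 * 2 + (2 * n - card T2) * 1)"
    using hs dx by linarith
  then have "2 * n ^ 2 + 2 * n \<le> 4 * n + 2" using cT2 assms(1) by linarith
  moreover have "2 * n \<le> n * n" using mult_le_mono1[OF assms(1), of n] by simp
  ultimately show False using assms(1) unfolding power2_eq_square by linarith
qed

end
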